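(* Let $\alpha\in(0,1)\cup(1,\infty)$ and let $p_{X,Y}=p_Xp_{Y\mid X}$ be a joint distribution on finite alphabets $\mathcal X\times\mathcal Y$. Then $$I_\alpha^{\mathrm S}(X;Y)=\max_{r_{X\mid Y}}F_\alpha^{\mathrm{S1}}(p_X,r_{X\mid Y})=\max_{r_{X\mid Y}}F_\alpha^{\mathrm{S2}}(p_X,r_{X\mid Y}),$$ where $$F_\alpha^{\mathrm{S1}}(p_X,r_{X\mid Y}):=\frac{\alpha}{\alpha-1}\log\sum_{x,y}p_X(x)^{1/\alpha}p_{Y\mid X}(y\mid x)\,r_{X\mid Y}(x\mid y)^{1-\frac1\alpha},$$ $$F_\alpha^{\mathrm{S2}}(p_X,r_{X\mid Y}):=F_\alpha^{\mathrm{S1}}(p_X,r_{X_\alpha\mid Y})=\frac{\alpha}{\alpha-1}\log\sum_{x,y}p_X(x)^{1/\alpha}p_{Y\mid X}(y\mid x)\,r_{X_\alpha\mid Y}(x\mid y)^{1-\frac1\alpha}.$$ Moreover, for $\alpha\in(1,\infty)$, $$I_\alpha^{\mathrm S}(X;Y)=\max_{\tilde q_{X,Y}}\max_{r_{X\mid Y}}\tilde F_\alpha^{\mathrm{S3}}(p_X,\tilde q_{X,Y},r_{X\mid Y}),$$ where, writing $\tilde q_X$ for the $X$-marginal of $\tilde q_{X,Y}$, $$\tilde F_\alpha^{\mathrm{S3}}(p_X,\tilde q_{X,Y},r_{X\mid Y}):=\frac{\alpha}{1-\alpha}D(\tilde q_{X,Y}\,\|\,\tilde q_Xp_{Y\mid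 X})+\mathbb E^{\tilde q_{X,Y}}\!\left[\log\frac{r_{X\mid Y}(X\mid Y)}{\tilde q_X(X)}\right]+\frac{1}{1-\alpha}D(\tilde q_X\,\|\,p_X).$$
   Context: All alphabets are finite and $\log$ is the natural logarithm. $D(p\|q)=\sum_z p(z)\log\frac{p(z)}{q(z)}$ is the Kullback–Leibler divergence. For $\alpha\in(0,1)\cup(1,\infty)$, the Rényi divergence is $D_\alpha(p\|q):=\frac{1}{\alpha-1}\log\sum_z p(z)^\alpha q(z)^{1-\alpha}$, and the Sibson mutual information of order $\alpha$ is $I_\alpha^{\mathrm S}(X;Y):=\min_{q_Y}D_\alpha(p_Xp_{Y\mid X}\|p_Xq_Y)$, the minimum over all distributions $q_Y$ on $\mathcal Y$. A reverse channel $r_{X\mid Y}=\{r_{X\mid Y}(\cdot\mid y)\}_{y\in\mathcal Y}$ is a family of distributions on $\mathcal X$ indexed by $y$; maxima over $r_{X\mid Y}$ range over all reverse channels, and maxima over $\tilde q_{X,Y}$ range over all joint distributions on $\mathcal X\times\mathcal Y$. $r_{X_\alpha\mid Y}$ denotes the $\alpha$-tilted reverse channel, $r_{X_\alpha\mid Y}(x\mid y):=r_{X\mid Y}(x\mid y)^\alpha/\sum_{x'}r_{X\mid Y}(x'\mid y)^\alpha$. $\mathbb E^{q}[\cdot]$ denotes expectation with respect to $q$. *)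

theory Defs
  imports "HOL-Analysis.Analysis"
begin

definition is_pmf :: "('a::finite \<Rightarrow> real) \<Rightarrow> bool" where
  "is_pmf p \<longleftrightarrow> (\<forall>z. 0 \<le> p z) \<and> sum p UNIV = 1"

(* Channel p_{Y|X}: W x y = p_{Y|X}(y|x) *)
definition is_channel :: "('x::finite \<Rightarrow> 'y::finite \<Rightarrow> real) \<Rightarrow> bool" where
  "is_channel W \<longleftrightarrow> (\<forall>x. is_pmf (W x))"

(* Reverse channel r_{X|Y}: r y x = r_{X|Y}(x|y) *)
definition reverse_channels :: "('y::finite \<Rightarrow> 'x::finite \<Rightarrow> real) set" where
  "reverse_channels = {r. \<forall>y. is_pmf (r y)}"

(* Kullback-Leibler divergence, conventions 0 log(0/q) = 0, p log(p/0) = +\<infinity> *)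
definition KL :: "('a::finite \<Rightarrow> real) \<Rightarrow> ('a \<Rightarrow> real) \<Rightarrow> ereal" where
  "KL p q = (if \<exists>z. p z > 0 \<and> q z = 0 then \<infinity>
             else ereal (\<Sum>z\<in>{z. p z > 0}. p z * ln (p z / q z)))"

(* Renyi divergence of order \<alpha>, usual conventions (0^\<alpha> = 0, p^\<alpha> 0^(1-\<alpha>) = +\<infinity> for \<alpha> > 1, p > 0,
   log 0 = -\<infinity>) *)
definition renyi_div :: "real \<Rightarrow> ('a::finite \<Rightarrow> real) \<Rightarrow> ('a \<Rightarrow> real) \<Rightarrow> ereal" where
  "renyi_div \<alpha> p q =
     (let s = (\<Sum>z\<in>{z. p z > 0 \<and> q z > 0}. p z powr \<alpha> * q z powr (1 - \<alpha>)) in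
      if (\<alpha> > 1 \<and> (\<exists>z. p z > 0 \<and> q z = 0)) \<or> s = 0 then \<infinity>
      else ereal (ln s / (\<alpha> - 1)))"

definition sibson_MI :: "real \<Rightarrow> ('x::finite \<Rightarrow> real) \<Rightarrow> ('x \<Rightarrow> 'y::finite \<Rightarrow> real) \<Rightarrow> ereal" where
  "sibson_MI \<alpha> p W =
     (INF q\<in>{q :: 'y \<Rightarrow> real. is_pmf q}.
        renyi_div \<alpha> (\<lambda>(x, y). p x * W x y) (\<lambda>(x, y). p x * q y))"

(* F_\<alpha>^{S1}(p_X, r_{X|Y}) with conventions 0 * anything = 0, 0^(negative) = +\<infinity>, log 0 = -\<infinity>,
   log +\<infinity> = +\<infinity> *)
definition F_S1 :: "real \<Rightarrow> ('x::finite \<Rightarrow> real) \<Rightarrow> ('x \<Rightarrow> 'y::finite \<Rightarrow> real)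
                     \<Rightarrow> ('y \<Rightarrow> 'x \<Rightarrow> real) \<Rightarrow> ereal" where
  "F_S1 \<alpha> p W r =
     (let S = {(x, y). p x > 0 \<and> W x y > 0};
          s = (\<Sum>(x, y)\<in>{(x, y). (x, y) \<in> S \<and> r y x > 0}.
                 p x powr (1 / \<alpha>) * W x y * r y x powr (1 - 1 / \<alpha>)) in
      if (\<alpha> < 1 \<and> (\<exists>(x, y)\<in>S. r y x = 0)) \<or> s = 0 then -\<infinity>
      else ereal (\<alpha> / (\<alpha> - 1) * ln s))"

definition tilt :: "real \<Rightarrow> ('y \<Rightarrow> 'x::finite \<Rightarrow> real) \<Rightarrow> ('y \<Rightarrow> 'x \<Rightarrow> real)" where
  "tilt \<alpha> r = (\<lambda>y x. r y x powr \<alpha> / (\<Sum>x'\<in>UNIV. r y x' powr \<alpha>))"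

definition F_S2 :: "real \<Rightarrow> ('x::finite \<Rightarrow> real) \<Rightarrow> ('x \<Rightarrow> 'y::finite \<Rightarrow> real)
                     \<Rightarrow> ('y \<Rightarrow> 'x \<Rightarrow> real) \<Rightarrow> ereal" where
  "F_S2 \<alpha> p W r = F_S1 \<alpha> p W (tilt \<alpha> r)"

definition marg_X :: "('x \<Rightarrow> 'y::finite \<Rightarrow> real) \<Rightarrow> 'x \<Rightarrow> real" where
  "marg_X q = (\<lambda>x. \<Sum>y\<in>UNIV. q x y)"

(* E^{q}[log (r(X|Y) / q_X(X))], conventions 0 log(.) = 0, log 0 = -\<infinity> *)
definition exp_log_ratio :: "('x::finite \<Rightarrow> 'y::finite \<Rightarrow> real) \<Rightarrow> ('y \<Rightarrow> 'x \<Rightarrow> real) \<Rightarrow> ereal" where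
  "exp_log_ratio q r =
     (if \<exists>x y. q x y > 0 \<and> r y x = 0 then -\<infinity>
      else ereal (\<Sum>(x, y)\<in>{(x, y). q x y > 0}. q x y * ln (r y x / marg_X q x)))"

definition F_S3 :: "real \<Rightarrow> ('x::finite \<Rightarrow> real) \<Rightarrow> ('x \<Rightarrow> 'y::finite \<Rightarrow> real)
                     \<Rightarrow> ('x \<Rightarrow> 'y \<Rightarrow> real) \<Rightarrow> ('y \<Rightarrow> 'x \<Rightarrow> real) \<Rightarrow> ereal" where
  "F_S3 \<alpha> p W q r =
     ereal (\<alpha> / (1 - \<alpha>)) * KL (\<lambda>(x, y). q x y) (\<lambda>(x, y). marg_X q x * W x y)
     + exp_log_ratio q r
     + ereal (1 / (1 - \<alpha>)) * KL (marg_X q) p"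

definition is_max_of :: "('a \<Rightarrow> ereal) \<Rightarrow> 'a set \<Rightarrow> ereal \<Rightarrow> bool" where
  "is_max_of f A v \<longleftrightarrow> (\<forall>a\<in>A. f a \<le> v) \<and> (\<exists>a\<in>A. f a = v)"

end

theory Submission
  imports Defs
begin

lemma young0:
  fixes a b th :: real
  assumes "0 \<le> a" "0 \<le> b" "0 < th" "th < 1"
  shows "a powr th * b powr (1 - th) \<le> th * a + (1 - th) * b"
proof (cases "a = 0 \<or> b = 0")
  case True then show ?thesis using assms by auto
next
  case False then show ?thesis using assms Youngs_inequality_0[of th "1-th" a b] by auto
qed

lemma holder:
  fixes a r :: "'i \<Rightarrow> real" and th :: real
  assumes "finite I" "\<And>i. i \<in> I \<Longrightarrow> 0 \<le> a i" "\<And>i. i \<in> I \<Longrightarrow> 0 \<le> r i" "0 < th" "th < 1"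
  shows "(\<Sum>i\<in>I. a i powr th * r i powr (1 - th)) \<le> (sum a I) powr th * (sum r I) powr (1 - th)"
proof -
  define A where "A = sum a I"
  define R where "R = sum r I"
  have A0: "A \<ge> 0" "R \<ge> 0" unfolding A_def R_def using assms by (auto intro: sum_nonneg)
  show ?thesis
  proof (cases "A = 0 \<or> R = 0")
    case True
    then have "(\<Sum>i\<in>I. a i powr th * r i powr (1 - th)) = 0"
      using assms sum_nonneg_eq_0_iff[of I a] sum_nonneg_eq_0_iff[of I r] unfolding A_def R_def
      by (intro sum.neutral) auto
    then show ?thesis by simp
  next
    case False
    then have Ap: "A > 0" "R > 0" using A0 by auto
    have "(\<Sum>i\<in>I. a i powr th * r i powr (1 - th)) =
          (\<Sum>i\<in>I. A powr th * R powr (1 - th) * ((a i / A) powr th * (r i / R) powr (1 - th)))"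
      using Ap by (intro sum.cong) (auto simp: powr_divide)
    also have "\<dots> \<le> (\<Sum>i\<in>I. A powr th * R powr (1 - th) * (th * (a i / A) + (1 - th) * (r i / R)))"
      using assms Ap by (intro sum_mono mult_left_mono young0) auto
    also have "\<dots> = A powr th * R powr (1 - th) * (th * (sum a I / A) + (1 - th) * (sum r I / R))"
      by (simp add: sum_distrib_left sum_distrib_right sum.distrib sum_divide_distrib[symmetric]
             flip: sum_distrib_left)
    also have "\<dots> = A powr th * R powr (1 - th)" using Ap unfolding A_def R_def by simp
    finally show ?thesis unfolding A_def R_def .
  qed
qed

lemma rholder:
  fixes a r :: "'i \<Rightarrow> real" and al :: real
  assumes "finite I" "\<And>i. i \<in> I \<Longrightarrow> 0 \<le> a i" "\<And>i. i \<in> I \<Longrightarrow> 0 \<le> r i"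
    "\<And>i. i \<in> I \<Longrightarrow> 0 < a i \<Longrightarrow> 0 < r i" "0 < al" "al < 1" "0 < sum r I"
  shows "(sum a I) powr (1/al) * (sum r I) powr (1 - 1/al) \<le> (\<Sum>i\<in>I. a i powr (1/al) * r i powr (1 - 1/al))"
proof -
  define u where "u i = a i powr (1/al) * r i powr (1 - 1/al)" for i
  define U where "U = sum u I"
  define R where "R = sum r I"
  define A where "A = sum a I"
  have U0: "U \<ge> 0" unfolding U_def u_def by (intro sum_nonneg) auto
  have au: "a i = u i powr al * r i powr (1 - al)" if i: "i \<in> I" for i
  proof (cases "a i = 0")
    case True then show ?thesis by (simp add: u_def)
  next
    case False
    then have ap: "a i > 0" "r i > 0" using assms i by force+
    have "u i powr al * r i powr (1 - al) = a i powr (1/al * al) * r i powr ((1 - 1/al) * al + (1 - al))"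
      unfolding u_def using ap by (simp add: powr_mult powr_powr powr_add)
    also have "\<dots> = a i" using assms ap by (simp add: field_simps)
    finally show ?thesis by simp
  qed
  have "A = (\<Sum>i\<in>I. u i powr al * r i powr (1 - al))" unfolding A_def using au by simp
  also have "\<dots> \<le> U powr al * R powr (1 - al)"
    unfolding U_def R_def using assms by (intro holder) (auto simp: u_def)
  finally have h: "A \<le> U powr al * R powr (1 - al)" .
  have A0: "0 \<le> A" unfolding A_def using assms by (auto intro: sum_nonneg)
  have "A powr (1/al) \<le> (U powr al * R powr (1 - al)) powr (1/al)"
    using h A0 assms by (intro powr_mono2) auto
  also have "\<dots> = U * R powr ((1 - al) / al)"
    using U0 assms by (simp add: powr_mult powr_powr)
  finally have h2: "A powr (1/al) \<le> U * R powr ((1 - al) / al)" .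
  have Rp: "R > 0" using assms unfolding R_def by simp
  have "A powr (1/al) * R powr (1 - 1/al) \<le> U * R powr ((1 - al) / al) * R powr (1 - 1/al)"
    using h2 by (intro mult_right_mono) auto
  also have "\<dots> = U * R powr ((1 - al) / al + (1 - 1/al))" by (simp add: powr_add)
  also have "(1 - al) / al + (1 - 1/al) = 0" using assms by (simp add: field_simps)
  finally show ?thesis using Rp unfolding A_def R_def U_def u_def by simp
qed

lemma sum_pairs: "(\<Sum>z\<in>(UNIV::('a::finite \<times> 'b::finite) set). f z) = (\<Sum>x\<in>UNIV. \<Sum>y\<in>UNIV. f (x, y))"
  by (subst UNIV_Times_UNIV[symmetric]) (simp add: sum.cartesian_product)

lemma sum_to_UNIV:
  fixes f :: "'a::finite \<Rightarrow> 'b::comm_monoid_add"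
  assumes "\<And>z. z \<notin> S \<Longrightarrow> f z = 0"
  shows "sum f S = sum f UNIV"
  using assms by (intro sum.mono_neutral_left) auto

lemma pos_sum_ex:
  fixes f :: "'a \<Rightarrow> real"
  assumes "0 < sum f S" shows "\<exists>z\<in>S. f z \<noteq> 0"
  using assms by (metis less_irrefl sum.neutral)

lemma KL_fin:
  fixes P Q :: "'a::finite \<Rightarrow> real"
  assumes "\<And>z. P z > 0 \<Longrightarrow> Q z \<noteq> 0" "\<And>z. 0 \<le> P z"
  shows "KL P Q = ereal (\<Sum>z\<in>UNIV. P z * ln (P z / Q z))"
proof -
  have "(\<Sum>z\<in>{z. P z > 0}. P z * ln (P z / Q z)) = (\<Sum>z\<in>UNIV. P z * ln (P z / Q z))"
    using assms(2) by (intro sum_to_UNIV) (auto simp: order.order_iff_strict)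
  then show ?thesis unfolding KL_def using assms(1) by auto
qed

lemma KL_inf: "P z > 0 \<Longrightarrow> Q z = 0 \<Longrightarrow> KL P Q = \<infinity>"
  unfolding KL_def by auto

lemma negmul_KL: "c < 0 \<Longrightarrow> ereal c * KL P Q \<noteq> \<infinity>"
  unfolding KL_def by auto

lemma ELR_fin:
  assumes "\<And>x y. q x y > 0 \<Longrightarrow> r y x \<noteq> 0" "\<And>x y. 0 \<le> q x y"
  shows "exp_log_ratio q r = ereal (\<Sum>x\<in>UNIV. \<Sum>y\<in>UNIV. q x y * ln (r y x / marg_X q x))"
proof -
  have "(\<Sum>(x, y)\<in>{(x, y). q x y > 0}. q x y * ln (r y x / marg_X q x))
      = (\<Sum>z\<in>UNIV. (\<lambda>(x, y). q x y * ln (r y x / marg_X q x)) z)"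
  proof (rule sum_to_UNIV)
    fix z :: "'a \<times> 'b" assume "z \<notin> {(x, y). q x y > 0}"
    then show "(\<lambda>(x, y). q x y * ln (r y x / marg_X q x)) z = 0"
      using assms(2)[of "fst z" "snd z"] by (cases z) (auto simp: order.order_iff_strict)
  qed
  also have "\<dots> = (\<Sum>x\<in>UNIV. \<Sum>y\<in>UNIV. q x y * ln (r y x / marg_X q x))"
    by (simp add: sum_pairs)
  finally show ?thesis unfolding exp_log_ratio_def using assms(1) by auto
qed

lemma ELR_ne: "exp_log_ratio q r \<noteq> \<infinity>"
  unfolding exp_log_ratio_def by auto

lemma negmul_inf: "(c::real) < 0 \<Longrightarrow> ereal c * \<infinity> = -\<infinity>"
  by simp

lemma sum3_minf:
  fixes a b c :: ereal
  assumes "a \<noteq> \<infinity>" "b \<noteq> \<infinity>" "c \<noteq> \<infinity>" "a = -\<infinity> \<or> b = -\<infinity> \<or> c = -\<infinity>"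
  shows "a + b + c = -\<infinity>"
  using assms by (cases a; cases b; cases c) auto

lemma margX_ge: "(\<And>x y. 0 \<le> q x y) \<Longrightarrow> q x y \<le> marg_X q x"
  unfolding marg_X_def by (intro member_le_sum) auto

lemma lin_id:
  fixes al a b c d e :: real
  assumes "al \<noteq> 0" "al \<noteq> 1"
  shows "(al-1)/al * (al/(1-al)*(a-b-c) + (d-b) + 1/(1-al)*(b-e)) = 1/al*e + c + (1-1/al)*d - a"
proof -
  have k1: "(al-1)/al * (al/(1-al)) = -1" and k2: "(al-1)/al*(1/(1-al)) = -1/al"
    using assms by (auto simp: field_simps)
  have "(al-1)/al * (al/(1-al)*(a-b-c) + (d-b) + 1/(1-al)*(b-e))
      = ((al-1)/al * (al/(1-al)))*(a-b-c) + (al-1)/al*(d-b) + ((al-1)/al*(1/(1-al)))*(b-e)"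
    by (simp only: distrib_left mult.assoc)
  also have "\<dots> = -(a-b-c) + (1 - 1/al)*(d-b) - 1/al*(b-e)"
    unfolding k1 k2 using assms by (simp add: diff_divide_distrib)
  also have "\<dots> = 1/al*e + c + (1-1/al)*d - a" by (simp add: algebra_simps add_divide_distrib[symmetric] diff_divide_distrib[symmetric])
  finally show ?thesis .
qed

locale sib =
  fixes al :: real and p :: "'x::finite \<Rightarrow> real" and W :: "'x \<Rightarrow> 'y::finite \<Rightarrow> real"
  assumes al0: "0 < al" and al1: "al \<noteq> 1" and pp: "is_pmf p" and Wc: "is_channel W"
begin

definition A :: "'y \<Rightarrow> real" where "A y = (\<Sum>x\<in>UNIV. p x * W x y powr al)"
definition T :: real where "T = (\<Sum>y\<in>UNIV. A y powr (1/al))"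
definition Iv :: real where "Iv = al / (al - 1) * ln T"

lemma p0: "0 \<le> p x" and psum: "sum p UNIV = 1"
  using pp by (auto simp: is_pmf_def)
lemma W0: "0 \<le> W x y" and Wsum: "(\<Sum>y\<in>UNIV. W x y) = 1"
  using Wc by (auto simp: is_channel_def is_pmf_def)

lemma A0: "0 \<le> A y"
  unfolding A_def using p0 by (intro sum_nonneg) auto

lemma A_pos_ex: "0 < A y \<Longrightarrow> \<exists>x. 0 < p x \<and> 0 < W x y"
proof -
  assume "0 < A y"
  then obtain x where "p x * W x y powr al \<noteq> 0" unfolding A_def using pos_sum_ex by blast
  then show ?thesis using p0[of x] W0[of x y] by (auto simp: order.order_iff_strict)
qed

lemma A_pos: "0 < p x \<Longrightarrow> 0 < W x y \<Longrightarrow> 0 < A y"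
proof -
  assume a: "0 < p x" "0 < W x y"
  have "p x * W x y powr al \<le> A y" unfolding A_def
    using p0 by (intro member_le_sum) auto
  moreover have "0 < p x * W x y powr al" using a by simp
  ultimately show ?thesis by simp
qed

lemma T_pos: "0 < T"
proof -
  obtain x where x: "p x \<noteq> 0" using psum pos_sum_ex[of p UNIV] by auto
  obtain y where y: "W x y \<noteq> 0" using Wsum[of x] pos_sum_ex[of "W x" UNIV] by auto
  have "0 < A y" using x y p0[of x] W0[of x y] by (intro A_pos[of x]) auto
  then have "0 < A y powr (1/al)" by simp
  also have "\<dots> \<le> T" unfolding T_def by (intro member_le_sum) auto
  finally show ?thesis .
qed

lemma renyi_sum:
  assumes q0: "\<And>y. 0 \<le> q y"
  shows "(\<Sum>z\<in>{z. (\<lambda>(x, y). p x * W x y) z > 0 \<and> (\<lambda>(x, y). p x * q y) z > 0}.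
            (\<lambda>(x, y). p x * W x y) z powr al * (\<lambda>(x, y). p x * q y) z powr (1 - al))
         = (\<Sum>y\<in>UNIV. q y powr (1 - al) * A y)"
proof -
  have nn: "0 \<le> (\<lambda>(x, y). p x * W x y) z" "0 \<le> (\<lambda>(x, y). p x * q y) z" for z
    using p0 W0 q0 by (auto simp: case_prod_beta)
  have "(\<Sum>z\<in>{z. (\<lambda>(x, y). p x * W x y) z > 0 \<and> (\<lambda>(x, y). p x * q y) z > 0}.
            (\<lambda>(x, y). p x * W x y) z powr al * (\<lambda>(x, y). p x * q y) z powr (1 - al))
      = (\<Sum>z\<in>UNIV. (\<lambda>(x, y). p x * W x y) z powr al * (\<lambda>(x, y). p x * q y) z powr (1 - al))"
  proof (rule sum_to_UNIV)
    fix z assume "z \<notin> {z. (\<lambda>(x, y). p x * W x y) z > 0 \<and> (\<lambda>(x, y). p x * q y) z > 0}"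
    then have "(\<lambda>(x, y). p x * W x y) z = 0 \<or> (\<lambda>(x, y). p x * q y) z = 0"
      using nn[of z] by force
    then show "(\<lambda>(x, y). p x * W x y) z powr al * (\<lambda>(x, y). p x * q y) z powr (1 - al) = 0"
      by auto
  qed
  also have "\<dots> = (\<Sum>x\<in>UNIV. \<Sum>y\<in>UNIV. (p x * W x y) powr al * (p x * q y) powr (1 - al))"
    by (simp add: sum_pairs)
  also have "\<dots> = (\<Sum>x\<in>UNIV. \<Sum>y\<in>UNIV. q y powr (1 - al) * (p x * W x y powr al))"
  proof (intro sum.cong refl)
    fix x y
    show "(p x * W x y) powr al * (p x * q y) powr (1 - al) = q y powr (1 - al) * (p x * W x y powr al)"
    proof (cases "p x = 0")
      case True then show ?thesis by simp
    next
      case False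
      then have "p x powr al * p x powr (1 - al) = p x"
        using p0[of x] by (simp flip: powr_add)
      then show ?thesis by (simp add: powr_mult algebra_simps)
    qed
  qed
  also have "\<dots> = (\<Sum>y\<in>UNIV. q y powr (1 - al) * A y)"
    unfolding A_def by (subst sum.swap) (simp add: sum_distrib_left)
  finally show ?thesis .
qed

lemma renyi_ge:
  assumes q: "is_pmf q"
  shows "ereal Iv \<le> renyi_div al (\<lambda>(x, y). p x * W x y) (\<lambda>(x, y). p x * q y)"
proof -
  have q0: "\<And>y. 0 \<le> q y" and qs: "sum q UNIV = 1" using q by (auto simp: is_pmf_def)
  define s where "s = (\<Sum>z\<in>{z. (\<lambda>(x, y). p x * W x y) z > 0 \<and> (\<lambda>(x, y). p x * q y) z > 0}.
            (\<lambda>(x, y). p x * W x y) z powr al * (\<lambda>(x, y). p x * q y) z powr (1 - al))"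
  have s_eq: "s = (\<Sum>y\<in>UNIV. q y powr (1 - al) * A y)" unfolding s_def using renyi_sum q0 by blast
  have s0: "0 \<le> s" unfolding s_eq by (intro sum_nonneg) (simp add: A0)
  define C where "C = ((al > 1 \<and> (\<exists>z. (\<lambda>(x, y). p x * W x y) z > 0 \<and> (\<lambda>(x, y). p x * q y) z = 0)) \<or> s = 0)"
  have R: "renyi_div al (\<lambda>(x, y). p x * W x y) (\<lambda>(x, y). p x * q y) = (if C then \<infinity> else ereal (ln s / (al - 1)))"
    unfolding renyi_div_def Let_def s_def C_def by (rule refl)
  have "ereal Iv \<le> (if C then \<infinity> else ereal (ln s / (al - 1)))"
  proof (cases C)
    case True then show ?thesis by simp
  next
    case False
    note False = False[unfolded C_def]
    then have sp: "0 < s" using s0 by auto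
    have Iv_eq: "Iv = al * ln T / (al - 1)" unfolding Iv_def by simp
    have "Iv \<le> ln s / (al - 1)"
    proof (cases "al < 1")
      case True
      have "s = (\<Sum>y\<in>UNIV. (A y powr (1/al)) powr al * q y powr (1 - al))"
        unfolding s_eq using al0 A0 by (intro sum.cong) (auto simp: powr_powr powr_one)
      also have "\<dots> \<le> T powr al * (sum q UNIV) powr (1 - al)"
        unfolding T_def using True al0 q0 by (intro holder) auto
      finally have "s \<le> T powr al" using qs by simp
      then have "ln s \<le> ln (T powr al)" using sp T_pos by (subst ln_le_cancel_iff) auto
      then have "ln s \<le> al * ln T" by simp
      then show ?thesis unfolding Iv_eq using True by (intro divide_right_mono_neg) auto
    next
      case False
      then have al1': "al > 1" using al1 by auto
      have qpos: "0 < q y" if Ay: "0 < A y" for y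
      proof -
        obtain x where x: "0 < p x" "0 < W x y" using A_pos_ex[OF Ay] by blast
        have "\<not> (p x * q y = 0)"
        proof
          assume "p x * q y = 0"
          moreover have "0 < p x * W x y" using x by simp
          ultimately have "\<exists>z. 0 < (case z of (x, y) \<Rightarrow> p x * W x y) \<and> (case z of (x, y) \<Rightarrow> p x * q y) = 0"
            by (intro exI[of _ "(x, y)"]) simp
          then show False
            using \<open>\<not> ((al > 1 \<and> _) \<or> s = 0)\<close> al1' by blast
        qed
        then show ?thesis using q0[of y] x by (auto simp: order.order_iff_strict)
      qed
      have "T = (\<Sum>y\<in>UNIV. (q y powr (1 - al) * A y) powr (1/al) * q y powr (1 - 1/al))"
        unfolding T_def
      proof (intro sum.cong refl)
        fix y
        show "A y powr (1/al) = (q y powr (1 - al) * A y) powr (1/al) * q y powr (1 - 1/al)"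
        proof (cases "A y = 0")
          case True then show ?thesis by simp
        next
          case False
          then have "0 < q y" using qpos A0[of y] by (auto simp: order.order_iff_strict)
          then have "(q y powr (1 - al) * A y) powr (1/al) * q y powr (1 - 1/al)
                 = A y powr (1/al) * q y powr ((1 - al) / al + (1 - 1/al))"
            by (simp add: powr_mult powr_powr powr_add)
          also have "(1 - al) / al + (1 - 1/al) = 0" using al0 by (simp add: field_simps)
          finally show ?thesis using \<open>0 < q y\<close> by simp
        qed
      qed
      also have "\<dots> \<le> s powr (1/al) * (sum q UNIV) powr (1 - 1/al)"
        unfolding s_eq using al1' al0 q0 A0 by (intro holder) auto
      finally have "T \<le> s powr (1/al)" using qs by simp
      then have "ln T \<le> ln (s powr (1/al))" using sp T_pos by (subst ln_le_cancel_iff) auto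
      then have "ln T \<le> ln s / al" by simp
      then have "al * ln T \<le> ln s" using al0 by (simp add: field_simps)
      then show ?thesis unfolding Iv_eq using al1' by (intro divide_right_mono) auto
    qed
    then show ?thesis using False by simp
  qed
  then show ?thesis unfolding R .
qed

definition qs :: "'y \<Rightarrow> real" where "qs y = A y powr (1/al) / T"

lemma qs_pmf: "is_pmf qs"
  unfolding is_pmf_def qs_def using T_pos by (auto simp: sum_divide_distrib[symmetric] T_def[symmetric])

lemma renyi_qs: "renyi_div al (\<lambda>(x, y). p x * W x y) (\<lambda>(x, y). p x * qs y) = ereal Iv"
proof -
  have q0: "\<And>y. 0 \<le> qs y" using qs_pmf by (auto simp: is_pmf_def)
  define s where "s = (\<Sum>z\<in>{z. (\<lambda>(x, y). p x * W x y) z > 0 \<and> (\<lambda>(x, y). p x * qs y) z > 0}.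
            (\<lambda>(x, y). p x * W x y) z powr al * (\<lambda>(x, y). p x * qs y) z powr (1 - al))"
  have s_eq: "s = (\<Sum>y\<in>UNIV. qs y powr (1 - al) * A y)" unfolding s_def using renyi_sum q0 by blast
  also have "\<dots> = (\<Sum>y\<in>UNIV. T powr (al - 1) * A y powr (1/al))"
  proof (intro sum.cong refl)
    fix y
    show "qs y powr (1 - al) * A y = T powr (al - 1) * A y powr (1/al)"
    proof (cases "A y = 0")
      case True then show ?thesis by (simp add: qs_def)
    next
      case False
      then have Ap: "0 < A y" using A0[of y] by auto
      have "qs y powr (1 - al) * A y = A y powr ((1/al) * (1 - al) + 1) * T powr (al - 1)"
      proof -
        have "T powr (al - 1) = 1 / T powr (1 - al)"
          using powr_minus_divide[of T "1 - al"] by simp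
        then show ?thesis unfolding qs_def using Ap T_pos
          by (simp add: powr_divide powr_powr powr_add)
      qed
      also have "(1/al) * (1 - al) + 1 = 1/al" using al0 by (simp add: field_simps)
      finally show ?thesis by simp
    qed
  qed
  also have "\<dots> = T powr (al - 1) * T" unfolding T_def by (simp add: sum_distrib_left)
  also have "\<dots> = T powr al" using T_pos by (simp add: powr_add[symmetric] powr_diff)
  finally have sT: "s = T powr al" .
  have nz: "\<not> (\<exists>z. (\<lambda>(x, y). p x * W x y) z > 0 \<and> (\<lambda>(x, y). p x * qs y) z = 0)"
  proof
    assume "\<exists>z. (\<lambda>(x, y). p x * W x y) z > 0 \<and> (\<lambda>(x, y). p x * qs y) z = 0"
    then obtain x y where h: "p x * W x y > 0" "p x * qs y = 0" by auto
    then have "p x > 0" "W x y > 0" using p0[of x] W0[of x y] by (auto simp: zero_less_mult_iff)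
    then have "A y > 0" by (rule A_pos)
    then have "qs y > 0" unfolding qs_def using T_pos by simp
    then show False using h \<open>p x > 0\<close> by simp
  qed
  have "s \<noteq> 0" using sT T_pos by simp
  then show ?thesis unfolding renyi_div_def Let_def s_def[symmetric] using nz sT T_pos
    by (simp add: Iv_def)
qed

lemma sibson_val: "sibson_MI al p W = ereal Iv"
  unfolding sibson_MI_def
proof (rule antisym)
  show "(INF q\<in>{q. is_pmf q}. renyi_div al (\<lambda>(x, y). p x * W x y) (\<lambda>(x, y). p x * q y)) \<le> ereal Iv"
  proof -
    have "(INF q\<in>{q. is_pmf q}. renyi_div al (\<lambda>(x, y). p x * W x y) (\<lambda>(x, y). p x * q y))
        \<le> renyi_div al (\<lambda>(x, y). p x * W x y) (\<lambda>(x, y). p x * qs y)"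
      by (rule INF_lower) (use qs_pmf in simp)
    then show ?thesis using renyi_qs by simp
  qed
  show "ereal Iv \<le> (INF q\<in>{q. is_pmf q}. renyi_div al (\<lambda>(x, y). p x * W x y) (\<lambda>(x, y). p x * q y))"
    using renyi_ge by (auto intro: INF_greatest)
qed

definition G :: "('y \<Rightarrow> 'x \<Rightarrow> real) \<Rightarrow> real" where
  "G r = (\<Sum>y\<in>UNIV. \<Sum>x\<in>UNIV. p x powr (1/al) * W x y * r y x powr (1 - 1/al))"

lemma rc_nonneg: "r \<in> reverse_channels \<Longrightarrow> 0 \<le> r y x"
  and rc_sum: "r \<in> reverse_channels \<Longrightarrow> (\<Sum>x\<in>UNIV. r y x) = 1"
  by (auto simp: reverse_channels_def is_pmf_def)

lemma G_nonneg: "(\<And>y x. 0 \<le> r y x) \<Longrightarrow> 0 \<le> G r"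
  unfolding G_def using p0 W0 by (intro sum_nonneg mult_nonneg_nonneg) auto

lemma FS1_eq:
  assumes r0: "\<And>y x. 0 \<le> r y x"
  shows "F_S1 al p W r = (if (al < 1 \<and> (\<exists>x y. p x > 0 \<and> W x y > 0 \<and> r y x = 0)) \<or> G r = 0 then -\<infinity>
            else ereal (al / (al - 1) * ln (G r)))"
proof -
  have "(\<Sum>(x, y)\<in>{(x, y). (x, y) \<in> {(x, y). p x > 0 \<and> W x y > 0} \<and> r y x > 0}.
                 p x powr (1 / al) * W x y * r y x powr (1 - 1 / al))
       = (\<Sum>z\<in>UNIV. (\<lambda>(x, y). p x powr (1 / al) * W x y * r y x powr (1 - 1 / al)) z)"
  proof (rule sum_to_UNIV)
    fix z :: "'x \<times> 'y"
    assume "z \<notin> {(x, y). (x, y) \<in> {(x, y). p x > 0 \<and> W x y > 0} \<and> r y x > 0}"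
    then show "(\<lambda>(x, y). p x powr (1 / al) * W x y * r y x powr (1 - 1 / al)) z = 0"
      using p0[of "fst z"] W0[of "fst z" "snd z"] r0[of "snd z" "fst z"]
      by (cases z) (auto simp: order.order_iff_strict)
  qed
  also have "\<dots> = G r" unfolding G_def sum_pairs by (subst sum.swap) simp
  finally have e: "(\<Sum>(x, y)\<in>{(x, y). (x, y) \<in> {(x, y). p x > 0 \<and> W x y > 0} \<and> r y x > 0}.
                 p x powr (1 / al) * W x y * r y x powr (1 - 1 / al)) = G r" .
  show ?thesis unfolding F_S1_def Let_def e by auto
qed

lemma pW_powr: "p x powr (1/al) * W x y = (p x * W x y powr al) powr (1/al)"
  using al0 W0[of x y] by (simp add: powr_mult powr_powr)

lemma Gy_le:
  assumes "1 < al" "r \<in> reverse_channels"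
  shows "(\<Sum>x\<in>UNIV. p x powr (1/al) * W x y * r y x powr (1 - 1/al)) \<le> A y powr (1/al)"
proof -
  have "(\<Sum>x\<in>UNIV. p x powr (1/al) * W x y * r y x powr (1 - 1/al))
      = (\<Sum>x\<in>UNIV. (p x * W x y powr al) powr (1/al) * r y x powr (1 - 1/al))"
    by (simp add: pW_powr)
  also have "\<dots> \<le> (A y) powr (1/al) * (\<Sum>x\<in>UNIV. r y x) powr (1 - 1/al)"
    unfolding A_def using assms p0 rc_nonneg[OF assms(2)] by (intro holder) auto
  finally show ?thesis using rc_sum[OF assms(2)] by simp
qed

lemma Gy_ge:
  assumes "al < 1" "r \<in> reverse_channels" "\<And>x. p x > 0 \<Longrightarrow> W x y > 0 \<Longrightarrow> r y x > 0"
  shows "A y powr (1/al) \<le> (\<Sum>x\<in>UNIV. p x powr (1/al) * W x y * r y x powr (1 - 1/al))"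
proof -
  have "A y powr (1/al) = (A y) powr (1/al) * (\<Sum>x\<in>UNIV. r y x) powr (1 - 1/al)"
    using rc_sum[OF assms(2)] by simp
  also have "\<dots> \<le> (\<Sum>x\<in>UNIV. (p x * W x y powr al) powr (1/al) * r y x powr (1 - 1/al))"
    unfolding A_def
  proof (intro rholder)
    fix x assume "0 < p x * W x y powr al"
    then have "p x > 0" "W x y > 0" using p0[of x] W0[of x y]
      by (auto simp: zero_less_mult_iff order.order_iff_strict)
    then show "0 < r y x" using assms by blast
  qed (use assms p0 rc_nonneg[OF assms(2)] rc_sum[OF assms(2)] al0 in auto)
  also have "\<dots> = (\<Sum>x\<in>UNIV. p x powr (1/al) * W x y * r y x powr (1 - 1/al))"
    by (simp add: pW_powr)
  finally show ?thesis .
qed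

lemma FS1_le:
  assumes r: "r \<in> reverse_channels"
  shows "F_S1 al p W r \<le> ereal Iv"
proof -
  have r0: "\<And>y x. 0 \<le> r y x" using rc_nonneg[OF r] .
  show ?thesis
  proof (cases "(al < 1 \<and> (\<exists>x y. p x > 0 \<and> W x y > 0 \<and> r y x = 0)) \<or> G r = 0")
    case True then show ?thesis unfolding FS1_eq[OF r0] by simp
  next
    case False
    then have Gp: "0 < G r" using G_nonneg[of r, OF r0] by auto
    have "al / (al - 1) * ln (G r) \<le> Iv"
    proof (cases "al < 1")
      case True
      have "T \<le> G r" unfolding T_def G_def
      proof (intro sum_mono Gy_ge[OF True r])
        fix y x assume "p x > 0" "W x y > 0"
        then show "r y x > 0" using False True r0[of y x] by (auto simp: order.order_iff_strict)
      qed
      then have "ln T \<le> ln (G r)" using T_pos by simp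
      moreover have "al / (al - 1) < 0" using True al0 by (simp add: divide_pos_neg)
      ultimately have "al / (al - 1) * ln (G r) \<le> al / (al - 1) * ln T"
        by (intro mult_left_mono_neg) auto
      then show ?thesis unfolding Iv_def .
    next
      case False
      then have al1': "1 < al" using al1 by auto
      have "G r \<le> T" unfolding T_def G_def by (intro sum_mono Gy_le[OF al1' r])
      then have "ln (G r) \<le> ln T" using Gp by simp
      moreover have "al / (al - 1) > 0" using al1' al0 by simp
      ultimately have "al / (al - 1) * ln (G r) \<le> al / (al - 1) * ln T"
        by (intro mult_left_mono) auto
      then show ?thesis unfolding Iv_def .
    qed
    then show ?thesis unfolding FS1_eq[OF r0] using False by simp
  qed
qed

definition rs :: "'y \<Rightarrow> 'x \<Rightarrow> real" where
  "rs y x = (if A y > 0 then p x * W x y powr al / A y else 1 / real CARD('x))"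

lemma rs_rc: "rs \<in> reverse_channels"
  unfolding reverse_channels_def is_pmf_def mem_Collect_eq
proof (intro allI conjI)
  fix y x show "0 \<le> rs y x" unfolding rs_def using p0[of x] A0[of y] by auto
next
  fix y show "sum (rs y) UNIV = 1"
  proof (cases "A y > 0")
    case True then show ?thesis unfolding rs_def
      by (simp add: sum_divide_distrib[symmetric] A_def[symmetric])
  next
    case False then show ?thesis unfolding rs_def by simp
  qed
qed

lemma G_rs: "G rs = T"
  unfolding G_def T_def
proof (intro sum.cong refl)
  fix y
  show "(\<Sum>x\<in>UNIV. p x powr (1/al) * W x y * rs y x powr (1 - 1/al)) = A y powr (1/al)"
  proof (cases "A y > 0")
    case False
    then have "A y = 0" using A0[of y] by simp
    then have "\<forall>x. p x * W x y powr al = 0"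
      using sum_nonneg_eq_0_iff[of UNIV "\<lambda>x. p x * W x y powr al"] p0 unfolding A_def by auto
    then have "\<forall>x. p x powr (1/al) * W x y = 0" by (simp add: pW_powr)
    then have "\<forall>x. p x powr (1/al) * W x y * rs y x powr (1 - 1/al) = 0" by simp
    then have "(\<Sum>x\<in>UNIV. p x powr (1/al) * W x y * rs y x powr (1 - 1/al)) = 0"
      by (intro sum.neutral) blast
    then show ?thesis using \<open>A y = 0\<close> by simp
  next
    case True
    have "p x powr (1/al) * W x y * rs y x powr (1 - 1/al) = p x * W x y powr al / A y powr (1 - 1/al)" for x
    proof (cases "p x * W x y powr al = 0")
      case True then show ?thesis by (auto simp: pW_powr)
    next
      case False
      then have pos: "0 < p x * W x y powr al" using p0[of x] by (simp add: order.order_iff_strict)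
      have e: "(p x * W x y powr al) powr (1/al) * (p x * W x y powr al) powr (1 - 1/al) = p x * W x y powr al"
        using pos by (simp flip: powr_add)
      have "p x powr (1/al) * W x y * rs y x powr (1 - 1/al)
          = (p x * W x y powr al) powr (1/al) * ((p x * W x y powr al) powr (1 - 1/al) / A y powr (1 - 1/al))"
        unfolding rs_def using True by (simp add: pW_powr powr_divide)
      also have "\<dots> = ((p x * W x y powr al) powr (1/al) * (p x * W x y powr al) powr (1 - 1/al)) / A y powr (1 - 1/al)"
        by simp
      finally show ?thesis using e by simp
    qed
    then have "(\<Sum>x\<in>UNIV. p x powr (1/al) * W x y * rs y x powr (1 - 1/al)) = A y / A y powr (1 - 1/al)"
      by (simp add: A_def sum_divide_distrib)
    also have "\<dots> = A y powr (1/al)"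
    proof -
      have "A y powr (1/al) * A y powr (1 - 1/al) = A y" using True by (simp flip: powr_add)
      then show ?thesis using True by (simp add: divide_eq_eq)
    qed
    finally show ?thesis .
  qed
qed

lemma FS1_rs: "F_S1 al p W rs = ereal Iv"
proof -
  have r0: "\<And>y x. 0 \<le> rs y x" using rc_nonneg[OF rs_rc] .
  have "\<not> (\<exists>x y. p x > 0 \<and> W x y > 0 \<and> rs y x = 0)"
  proof
    assume "\<exists>x y. p x > 0 \<and> W x y > 0 \<and> rs y x = 0"
    then obtain x y where h: "p x > 0" "W x y > 0" "rs y x = 0" by blast
    then have "A y > 0" using A_pos[OF h(1) h(2)] by simp
    then show False using h unfolding rs_def by simp
  qed
  then show ?thesis unfolding FS1_eq[OF r0] G_rs Iv_def using T_pos by simp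
qed

lemma rc_powr_pos:
  assumes r: "r \<in> reverse_channels"
  shows "0 < (\<Sum>x\<in>UNIV. r y x powr c)"
proof -
  obtain x where x: "r y x \<noteq> 0" using rc_sum[OF r, of y] pos_sum_ex[of "r y" UNIV] by auto
  then have "0 < r y x powr c" by simp
  also have "\<dots> \<le> (\<Sum>x\<in>UNIV. r y x powr c)" by (intro member_le_sum) auto
  finally show ?thesis .
qed

lemma tilt_rc: assumes r: "r \<in> reverse_channels" shows "tilt al r \<in> reverse_channels"
  unfolding reverse_channels_def is_pmf_def mem_Collect_eq tilt_def
proof (intro allI conjI)
  fix y z
  have "0 < (\<Sum>x\<in>UNIV. r y x powr al)" by (rule rc_powr_pos[OF r])
  then show "0 \<le> r y z powr al / (\<Sum>x'\<in>UNIV. r y x' powr al)" by simp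
next
  fix y
  have "0 < (\<Sum>x\<in>UNIV. r y x powr al)" by (rule rc_powr_pos[OF r])
  then show "(\<Sum>x\<in>UNIV. r y x powr al / (\<Sum>x'\<in>UNIV. r y x' powr al)) = 1"
    by (simp add: sum_divide_distrib[symmetric])
qed

definition rt :: "'y \<Rightarrow> 'x \<Rightarrow> real" where
  "rt y x = rs y x powr (1/al) / (\<Sum>x'\<in>UNIV. rs y x' powr (1/al))"

lemma rt_rc: "rt \<in> reverse_channels"
  unfolding reverse_channels_def is_pmf_def mem_Collect_eq rt_def
proof (intro allI conjI)
  fix y z
  have "0 < (\<Sum>x\<in>UNIV. rs y x powr (1/al))" by (rule rc_powr_pos[OF rs_rc])
  then show "0 \<le> rs y z powr (1/al) / (\<Sum>x'\<in>UNIV. rs y x' powr (1/al))" by simp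
next
  fix y
  have "0 < (\<Sum>x\<in>UNIV. rs y x powr (1/al))" by (rule rc_powr_pos[OF rs_rc])
  then show "(\<Sum>x\<in>UNIV. rs y x powr (1/al) / (\<Sum>x'\<in>UNIV. rs y x' powr (1/al))) = 1"
    by (simp add: sum_divide_distrib[symmetric])
qed

lemma tilt_rt: "tilt al rt = rs"
proof (intro ext)
  fix y x
  define Z where "Z = (\<Sum>x'\<in>UNIV. rs y x' powr (1/al))"
  have Zp: "0 < Z" unfolding Z_def by (rule rc_powr_pos[OF rs_rc])
  have e: "rt y x' powr al = rs y x' / Z powr al" for x'
    unfolding rt_def Z_def[symmetric] using al0 rc_nonneg[OF rs_rc, of y x']
    by (simp add: powr_divide powr_powr)
  have "tilt al rt y x = (rs y x / Z powr al) / (\<Sum>x'\<in>UNIV. rs y x' / Z powr al)"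
    unfolding tilt_def using e by simp
  also have "\<dots> = rs y x"
    using Zp rc_sum[OF rs_rc, of y] by (simp add: sum_divide_distrib[symmetric])
  finally show "tilt al rt y x = rs y x" .
qed

definition g :: "('y \<Rightarrow> 'x \<Rightarrow> real) \<Rightarrow> 'x \<Rightarrow> 'y \<Rightarrow> real" where
  "g r x y = p x powr (1/al) * W x y * r y x powr (1 - 1/al)"

lemma FS3_struct:
  assumes al1': "1 < al" and q: "is_pmf (\<lambda>(x, y). q x y)" and r: "r \<in> reverse_channels"
  shows "(\<exists>x y. q x y > 0 \<and> \<not> (p x > 0 \<and> W x y > 0 \<and> r y x > 0)) \<longrightarrow> F_S3 al p W q r = -\<infinity>"
    and "(\<forall>x y. q x y > 0 \<longrightarrow> p x > 0 \<and> W x y > 0 \<and> r y x > 0) \<longrightarrow>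
           (\<exists>X. F_S3 al p W q r = ereal X \<and>
               (al - 1) / al * X = (\<Sum>x\<in>UNIV. \<Sum>y\<in>UNIV. q x y * ln (g r x y / q x y)))"
proof -
  have q0: "\<And>x y. 0 \<le> q x y" using q unfolding is_pmf_def by (metis case_prod_conv)
  have r0: "\<And>y x. 0 \<le> r y x" using rc_nonneg[OF r] .
  have c1: "al / (1 - al) < 0" and c2: "1 / (1 - al) < 0" using al1' al0 by (auto simp: divide_pos_neg)
  show "(\<exists>x y. q x y > 0 \<and> \<not> (p x > 0 \<and> W x y > 0 \<and> r y x > 0)) \<longrightarrow> F_S3 al p W q r = -\<infinity>"
  proof
    assume "\<exists>x y. q x y > 0 \<and> \<not> (p x > 0 \<and> W x y > 0 \<and> r y x > 0)"
    then obtain x y where xy: "q x y > 0" "\<not> (p x > 0 \<and> W x y > 0 \<and> r y x > 0)" by blast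
    have qX: "marg_X q x > 0" using margX_ge[of q x y] q0 xy by force
    show "F_S3 al p W q r = -\<infinity>" unfolding F_S3_def
    proof (rule sum3_minf[OF negmul_KL[OF c1] ELR_ne negmul_KL[OF c2]])
      consider "p x = 0" | "W x y = 0" | "r y x = 0" using xy p0[of x] W0[of x y] r0[of y x]
        by (auto simp: order.order_iff_strict)
      then show "ereal (al / (1 - al)) * KL (\<lambda>(x, y). q x y) (\<lambda>(x, y). marg_X q x * W x y) = - \<infinity> \<or>
          exp_log_ratio q r = - \<infinity> \<or> ereal (1 / (1 - al)) * KL (marg_X q) p = - \<infinity>"
      proof cases
        case 1
        have "KL (marg_X q) p = \<infinity>" using KL_inf[of "marg_X q" x p] qX 1 by simp
        then show ?thesis using negmul_inf[OF c2] by simp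
      next
        case 2
        have "KL (\<lambda>(x, y). q x y) (\<lambda>(x, y). marg_X q x * W x y) = \<infinity>"
          using KL_inf[of "\<lambda>(x, y). q x y" "(x, y)" "\<lambda>(x, y). marg_X q x * W x y"] xy 2 by simp
        then show ?thesis using negmul_inf[OF c1] by simp
      next
        case 3
        then show ?thesis using xy unfolding exp_log_ratio_def by auto
      qed
    qed
  qed
  show "(\<forall>x y. q x y > 0 \<longrightarrow> p x > 0 \<and> W x y > 0 \<and> r y x > 0) \<longrightarrow>
           (\<exists>X. F_S3 al p W q r = ereal X \<and>
               (al - 1) / al * X = (\<Sum>x\<in>UNIV. \<Sum>y\<in>UNIV. q x y * ln (g r x y / q x y)))"
  proof
    assume good: "\<forall>x y. q x y > 0 \<longrightarrow> p x > 0 \<and> W x y > 0 \<and> r y x > 0"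
    define L where "L x y = al / (1 - al) * ln (q x y / (marg_X q x * W x y)) + ln (r y x / marg_X q x)
                 + 1 / (1 - al) * ln (marg_X q x / p x)" for x y
    have qXp: "q x y > 0 \<Longrightarrow> marg_X q x > 0" for x y using margX_ge[of q x y] q0 by force
    have K1: "KL (\<lambda>(x, y). q x y) (\<lambda>(x, y). marg_X q x * W x y)
        = ereal (\<Sum>x\<in>UNIV. \<Sum>y\<in>UNIV. q x y * ln (q x y / (marg_X q x * W x y)))"
    proof -
      have "KL (\<lambda>(x, y). q x y) (\<lambda>(x, y). marg_X q x * W x y)
          = ereal (\<Sum>z\<in>UNIV. (\<lambda>(x, y). q x y) z * ln ((\<lambda>(x, y). q x y) z / (\<lambda>(x, y). marg_X q x * W x y) z))"
      proof (rule KL_fin)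
        fix z :: "'x \<times> 'y" assume "0 < (\<lambda>(x, y). q x y) z"
        then show "(\<lambda>(x, y). marg_X q x * W x y) z \<noteq> 0" using good qXp by (cases z) force
      qed (auto simp: q0 case_prod_beta)
      then show ?thesis by (simp add: sum_pairs)
    qed
    have E: "exp_log_ratio q r = ereal (\<Sum>x\<in>UNIV. \<Sum>y\<in>UNIV. q x y * ln (r y x / marg_X q x))"
      using good q0 by (intro ELR_fin) force+
    have K2: "KL (marg_X q) p = ereal (\<Sum>x\<in>UNIV. \<Sum>y\<in>UNIV. q x y * ln (marg_X q x / p x))"
    proof -
      have "KL (marg_X q) p = ereal (\<Sum>x\<in>UNIV. marg_X q x * ln (marg_X q x / p x))"
      proof (rule KL_fin)
        fix x assume "0 < marg_X q x"
        then obtain y where "q x y \<noteq> 0" unfolding marg_X_def using pos_sum_ex by blast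
        then have "q x y > 0" using q0[of x y] by (simp add: order.order_iff_strict)
        then have "p x > 0" using good by blast
        then show "p x \<noteq> 0" by simp
      qed (auto simp: marg_X_def q0 intro: sum_nonneg)
      also have "\<dots> = ereal (\<Sum>x\<in>UNIV. \<Sum>y\<in>UNIV. q x y * ln (marg_X q x / p x))"
        by (simp add: sum_distrib_right marg_X_def[of q])
      finally show ?thesis .
    qed
    define X where "X = (\<Sum>x\<in>UNIV. \<Sum>y\<in>UNIV. q x y * L x y)"
    have FX: "F_S3 al p W q r = ereal X"
      unfolding F_S3_def K1 E K2 X_def L_def
      by (simp add: sum_distrib_left sum.distrib algebra_simps)
    have pt: "(al - 1) / al * (q x y * L x y) = q x y * ln (g r x y / q x y)" for x y
    proof (cases "q x y > 0")
      case False then have "q x y = 0" using q0[of x y] by simp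
      then show ?thesis by simp
    next
      case True
      then have pos: "p x > 0" "W x y > 0" "r y x > 0" "marg_X q x > 0" using good qXp by auto
      have "L x y = al / (1 - al) * (ln (q x y) - ln (marg_X q x) - ln (W x y)) + (ln (r y x) - ln (marg_X q x))
                 + 1 / (1 - al) * (ln (marg_X q x) - ln (p x))"
        unfolding L_def using pos True by (simp add: ln_div ln_mult)
      moreover have "ln (g r x y / q x y) = 1/al * ln (p x) + ln (W x y) + (1 - 1/al) * ln (r y x) - ln (q x y)"
        unfolding g_def using pos True by (simp add: ln_div ln_mult)
      ultimately have "(al - 1) / al * L x y = ln (g r x y / q x y)"
        using lin_id[of al "ln (q x y)" "ln (marg_X q x)" "ln (W x y)" "ln (r y x)" "ln (p x)"] al0 al1
        by simp
      then show ?thesis by (metis mult.left_commute)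
    qed
    have "(al - 1) / al * X = (\<Sum>x\<in>UNIV. \<Sum>y\<in>UNIV. q x y * ln (g r x y / q x y))"
      unfolding X_def sum_distrib_left pt ..
    then show "\<exists>X. F_S3 al p W q r = ereal X \<and>
               (al - 1) / al * X = (\<Sum>x\<in>UNIV. \<Sum>y\<in>UNIV. q x y * ln (g r x y / q x y))"
      using FX by blast
  qed
qed

lemma qpmf:
  assumes "is_pmf (\<lambda>(x, y). q x y)"
  shows "\<And>x y. 0 \<le> q x y" and "(\<Sum>x\<in>UNIV. \<Sum>y\<in>UNIV. q x y) = 1"
proof -
  show "\<And>x y. 0 \<le> q x y" using assms unfolding is_pmf_def by (metis case_prod_conv)
  have "(\<Sum>z\<in>UNIV. (\<lambda>(x, y). q x y) z) = 1" using assms unfolding is_pmf_def by blast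
  then show "(\<Sum>x\<in>UNIV. \<Sum>y\<in>UNIV. q x y) = 1" by (simp add: sum_pairs)
qed

lemma G_g: "G r = (\<Sum>x\<in>UNIV. \<Sum>y\<in>UNIV. g r x y)"
  unfolding G_def g_def by (rule sum.swap)

lemma gibbs_bound:
  fixes q f :: "'a \<Rightarrow> 'b \<Rightarrow> real"
  assumes q0: "\<And>x y. 0 \<le> q x y" and qs1: "(\<Sum>x\<in>UNIV. \<Sum>y\<in>UNIV. q x y) = 1"
    and f0: "\<And>x y. 0 \<le> f x y" and fpos: "\<And>x y. q x y > 0 \<Longrightarrow> f x y > 0"
    and Sp: "0 < (\<Sum>x\<in>UNIV. \<Sum>y\<in>UNIV. f x y)"
  shows "(\<Sum>x\<in>UNIV. \<Sum>y\<in>UNIV. q x y * ln (f x y / q x y)) \<le> ln (\<Sum>x\<in>UNIV. \<Sum>y\<in>UNIV. f x y)"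
proof -
  define S where "S = (\<Sum>x\<in>UNIV. \<Sum>y\<in>UNIV. f x y)"
  have Sp': "0 < S" using Sp unfolding S_def .
  have tw: "q x y * ln (f x y / q x y) \<le> f x y / S - q x y + q x y * ln S" for x y
  proof (cases "q x y > 0")
    case False then have "q x y = 0" using q0[of x y] by linarith
    then show ?thesis using f0[of x y] Sp' by simp
  next
    case True
    have fp: "f x y > 0" using fpos True .
    have "ln (f x y / (q x y * S)) \<le> f x y / (q x y * S) - 1"
      using fp True Sp' by (intro ln_le_minus_one) simp
    moreover have "ln (f x y / q x y) = ln (f x y / (q x y * S)) + ln S"
      using fp True Sp' by (simp add: ln_div ln_mult)
    ultimately have "ln (f x y / q x y) \<le> f x y / (q x y * S) - 1 + ln S" by simp
    then have "q x y * ln (f x y / q x y) \<le> q x y * (f x y / (q x y * S) - 1 + ln S)"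
      using True by (intro mult_left_mono) auto
    also have "\<dots> = f x y / S - q x y + q x y * ln S" using True by (simp add: field_simps)
    finally show ?thesis .
  qed
  have "(\<Sum>x\<in>UNIV. \<Sum>y\<in>UNIV. q x y * ln (f x y / q x y))
      \<le> (\<Sum>x\<in>UNIV. \<Sum>y\<in>UNIV. f x y / S - q x y + q x y * ln S)"
    by (intro sum_mono tw)
  also have "\<dots> = S / S - (\<Sum>x\<in>UNIV. \<Sum>y\<in>UNIV. q x y) + (\<Sum>x\<in>UNIV. \<Sum>y\<in>UNIV. q x y) * ln S"
    unfolding S_def by (simp add: sum.distrib sum_subtractf sum_divide_distrib[symmetric] sum_distrib_right)
  also have "\<dots> = ln S" using Sp' qs1 by simp
  finally show ?thesis unfolding S_def .
qed

lemma g_nonneg: "r \<in> reverse_channels \<Longrightarrow> 0 \<le> g r x y"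
  unfolding g_def using p0[of x] W0[of x y] by simp

lemma FS3_le_FS1:
  assumes al1': "1 < al" and q: "is_pmf (\<lambda>(x, y). q x y)" and r: "r \<in> reverse_channels"
  shows "F_S3 al p W q r \<le> F_S1 al p W r"
proof (cases "\<forall>x y. q x y > 0 \<longrightarrow> p x > 0 \<and> W x y > 0 \<and> r y x > 0")
  case False
  then show ?thesis using FS3_struct(1)[OF al1' q r] by auto
next
  case good: True
  obtain X where X: "F_S3 al p W q r = ereal X"
    "(al - 1) / al * X = (\<Sum>x\<in>UNIV. \<Sum>y\<in>UNIV. q x y * ln (g r x y / q x y))"
    using FS3_struct(2)[OF al1' q r] good by blast
  note q0 = qpmf(1)[OF q] and qs1 = qpmf(2)[OF q]
  have gpos: "g r x y > 0" if qp: "q x y > 0" for x y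
  proof -
    have "p x > 0" "W x y > 0" "r y x > 0" using good qp by auto
    then show ?thesis unfolding g_def by simp
  qed
  obtain x y where "q x y \<noteq> 0"
    using qs1 pos_sum_ex[of "\<lambda>x. \<Sum>y\<in>UNIV. q x y" UNIV] pos_sum_ex[of "q _" UNIV] by force
  then have qxy: "q x y > 0" using q0[of x y] by simp
  have "0 < g r x y" using gpos[OF qxy] .
  also have "\<dots> \<le> (\<Sum>y\<in>UNIV. g r x y)" using g_nonneg[OF r] by (intro member_le_sum) auto
  also have "\<dots> \<le> (\<Sum>x\<in>UNIV. \<Sum>y\<in>UNIV. g r x y)"
    using g_nonneg[OF r] by (intro member_le_sum sum_nonneg) auto
  finally have Gp: "0 < G r" unfolding G_g .
  have "(al - 1) / al * X \<le> ln (G r)"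
    unfolding X(2) G_g using q0 qs1 g_nonneg[OF r] gpos Gp[unfolded G_g] by (rule gibbs_bound)
  then have "X \<le> al / (al - 1) * ln (G r)" using al1' al0 by (simp add: field_simps)
  moreover have "F_S1 al p W r = ereal (al / (al - 1) * ln (G r))"
    using FS1_eq[of r] rc_nonneg[OF r] al1' Gp by auto
  ultimately show ?thesis using X(1) by simp
qed

definition rq :: "('x \<Rightarrow> 'y \<Rightarrow> real) \<Rightarrow> 'y \<Rightarrow> 'x \<Rightarrow> real" where
  "rq q y x = (if (\<Sum>x'\<in>UNIV. q x' y) > 0 then q x y / (\<Sum>x'\<in>UNIV. q x' y) else 1 / real CARD('x))"

lemma rq_rc:
  assumes q0: "\<And>x y. 0 \<le> q x y"
  shows "rq q \<in> reverse_channels"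
  unfolding reverse_channels_def is_pmf_def mem_Collect_eq
proof (intro allI conjI)
  fix y z show "0 \<le> rq q y z" unfolding rq_def using q0 by auto
next
  fix y show "sum (rq q y) UNIV = 1"
  proof (cases "(\<Sum>x'\<in>UNIV. q x' y) > 0")
    case True then show ?thesis unfolding rq_def
      by (simp add: sum_divide_distrib[symmetric])
  next
    case False then show ?thesis unfolding rq_def by simp
  qed
qed

lemma ELR_le:
  assumes q: "is_pmf (\<lambda>(x, y). q x y)" and r: "r \<in> reverse_channels"
  shows "exp_log_ratio q r \<le> exp_log_ratio q (rq q)"
proof (cases "\<exists>x y. q x y > 0 \<and> r y x = 0")
  case True then show ?thesis unfolding exp_log_ratio_def[of q r] by simp
next
  case False
  note q0 = qpmf(1)[OF q] and qs1 = qpmf(2)[OF q]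
  note r0 = rc_nonneg[OF r]
  define qY where "qY y = (\<Sum>x'\<in>UNIV. q x' y)" for y
  have qYge: "q x y \<le> qY y" for x y unfolding qY_def using q0 by (intro member_le_sum) auto
  have qXge: "q x y \<le> marg_X q x" for x y using margX_ge[of q x y] q0 by blast
  have rqpos: "rq q y x > 0" if "q x y > 0" for x y
    using that qYge[of x y] unfolding rq_def qY_def[symmetric] by auto
  have E1: "exp_log_ratio q r = ereal (\<Sum>x\<in>UNIV. \<Sum>y\<in>UNIV. q x y * ln (r y x / marg_X q x))"
    using False q0 by (intro ELR_fin) auto
  have E2: "exp_log_ratio q (rq q) = ereal (\<Sum>x\<in>UNIV. \<Sum>y\<in>UNIV. q x y * ln (rq q y x / marg_X q x))"
    using rqpos q0 by (intro ELR_fin) force+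
  have tw: "q x y * ln (r y x / marg_X q x) \<le> q x y * ln (rq q y x / marg_X q x) + (r y x * qY y - q x y)" for x y
  proof (cases "q x y > 0")
    case False then have "q x y = 0" using q0[of x y] by linarith
    then show ?thesis using r0[of y x] qYge[of x y] by simp
  next
    case True
    have pos: "qY y > 0" "marg_X q x > 0" "r y x > 0"
      using True qYge[of x y] qXge[of x y] False r0[of y x] by (auto simp: order.order_iff_strict)
    have rqe: "rq q y x = q x y / qY y" unfolding rq_def qY_def[symmetric] using pos by simp
    have "ln (r y x * qY y / q x y) \<le> r y x * qY y / q x y - 1"
      using pos True by (intro ln_le_minus_one) simp
    moreover have "ln (r y x * qY y / q x y) = ln (r y x / marg_X q x) - ln (rq q y x / marg_X q x)"
      unfolding rqe using pos True by (simp add: ln_div ln_mult)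
    ultimately have "ln (r y x / marg_X q x) \<le> ln (rq q y x / marg_X q x) + (r y x * qY y / q x y - 1)"
      by simp
    then have "q x y * ln (r y x / marg_X q x) \<le> q x y * (ln (rq q y x / marg_X q x) + (r y x * qY y / q x y - 1))"
      using True by (intro mult_left_mono) auto
    also have "\<dots> = q x y * ln (rq q y x / marg_X q x) + (r y x * qY y - q x y)"
      using True by (simp add: field_simps)
    finally show ?thesis .
  qed
  have "(\<Sum>x\<in>UNIV. \<Sum>y\<in>UNIV. q x y * ln (r y x / marg_X q x))
     \<le> (\<Sum>x\<in>UNIV. \<Sum>y\<in>UNIV. q x y * ln (rq q y x / marg_X q x) + (r y x * qY y - q x y))"
    by (intro sum_mono tw)
  also have "\<dots> = (\<Sum>x\<in>UNIV. \<Sum>y\<in>UNIV. q x y * ln (rq q y x / marg_X q x))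
        + ((\<Sum>x\<in>UNIV. \<Sum>y\<in>UNIV. r y x * qY y) - (\<Sum>x\<in>UNIV. \<Sum>y\<in>UNIV. q x y))"
    by (simp add: sum.distrib sum_subtractf)
  also have "(\<Sum>x\<in>UNIV. \<Sum>y\<in>UNIV. r y x * qY y) = (\<Sum>y\<in>UNIV. qY y * (\<Sum>x\<in>UNIV. r y x))"
    by (subst sum.swap) (simp add: sum_distrib_left mult.commute)
  also have "\<dots> = (\<Sum>y\<in>UNIV. qY y)" using rc_sum[OF r] by simp
  also have "\<dots> = 1" unfolding qY_def using qs1 by (subst sum.swap) simp
  finally show ?thesis unfolding E1 E2 using qs1 by simp
qed

lemma FS3_rq:
  assumes q: "is_pmf (\<lambda>(x, y). q x y)" and r: "r \<in> reverse_channels"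
  shows "F_S3 al p W q r \<le> F_S3 al p W q (rq q)"
  unfolding F_S3_def using ELR_le[OF q r] by (intro add_mono order_refl)

definition qst :: "'x \<Rightarrow> 'y \<Rightarrow> real" where "qst x y = g rs x y / T"

lemma qst_pmf: "is_pmf (\<lambda>(x, y). qst x y)"
  unfolding is_pmf_def
proof (intro conjI allI)
  fix z :: "'x \<times> 'y"
  show "0 \<le> (\<lambda>(x, y). qst x y) z"
    using g_nonneg[OF rs_rc] T_pos unfolding qst_def by (cases z) simp
next
  have "(\<Sum>x\<in>UNIV. \<Sum>y\<in>UNIV. qst x y) = G rs / T"
    unfolding qst_def G_g by (simp add: sum_divide_distrib[symmetric])
  then show "sum (\<lambda>(x, y). qst x y) UNIV = 1" using G_rs T_pos by (simp add: sum_pairs)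
qed

lemma FS3_qst:
  assumes al1': "1 < al"
  shows "F_S3 al p W qst rs = ereal Iv"
proof -
  have good: "\<forall>x y. qst x y > 0 \<longrightarrow> p x > 0 \<and> W x y > 0 \<and> rs y x > 0"
  proof (intro allI impI)
    fix x y assume "qst x y > 0"
    then have "g rs x y \<noteq> 0" unfolding qst_def by auto
    then have "p x \<noteq> 0" "W x y \<noteq> 0" "rs y x \<noteq> 0" unfolding g_def by auto
    then show "p x > 0 \<and> W x y > 0 \<and> rs y x > 0"
      using p0[of x] W0[of x y] rc_nonneg[OF rs_rc, of y x] by (auto simp: order.order_iff_strict)
  qed
  obtain X where X: "F_S3 al p W qst rs = ereal X"
    "(al - 1) / al * X = (\<Sum>x\<in>UNIV. \<Sum>y\<in>UNIV. qst x y * ln (g rs x y / qst x y))"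
    using FS3_struct(2)[OF al1' qst_pmf rs_rc] good by blast
  have "(\<Sum>x\<in>UNIV. \<Sum>y\<in>UNIV. qst x y * ln (g rs x y / qst x y))
      = (\<Sum>x\<in>UNIV. \<Sum>y\<in>UNIV. qst x y * ln T)"
  proof (intro sum.cong refl)
    fix x y
    show "qst x y * ln (g rs x y / qst x y) = qst x y * ln T"
    proof (cases "qst x y = 0")
      case True then show ?thesis by simp
    next
      case False
      then have "g rs x y \<noteq> 0" unfolding qst_def by auto
      then have "g rs x y / qst x y = T" unfolding qst_def using T_pos by simp
      then show ?thesis by simp
    qed
  qed
  also have "\<dots> = ln T" using qpmf(2)[OF qst_pmf] by (simp add: sum_distrib_right[symmetric])
  finally have "(al - 1) / al * X = ln T" using X(2) by simp
  then have "X = Iv" unfolding Iv_def using al0 al1' by (simp add: field_simps)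
  then show ?thesis using X(1) by simp
qed

lemma main:
  shows "is_max_of (F_S1 al p W) reverse_channels (sibson_MI al p W)
       \<and> is_max_of (F_S2 al p W) reverse_channels (sibson_MI al p W)
       \<and> (1 < al \<longrightarrow>
            is_max_of (\<lambda>q. SUP r\<in>reverse_channels. F_S3 al p W q r)
                      {q. is_pmf (\<lambda>(x, y). q x y)} (sibson_MI al p W)
          \<and> (\<forall>q. is_pmf (\<lambda>(x, y). q x y) \<longrightarrow>
                 is_max_of (F_S3 al p W q) reverse_channels
                           (SUP r\<in>reverse_channels. F_S3 al p W q r)))"
proof (intro conjI impI allI)
  show "is_max_of (F_S1 al p W) reverse_channels (sibson_MI al p W)"
    unfolding is_max_of_def sibson_val using FS1_le rs_rc FS1_rs by blast
  show "is_max_of (F_S2 al p W) reverse_channels (sibson_MI al p W)"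
    unfolding is_max_of_def sibson_val F_S2_def using FS1_le tilt_rc rt_rc tilt_rt FS1_rs by metis
next
  assume al1': "1 < al"
  show "is_max_of (\<lambda>q. SUP r\<in>reverse_channels. F_S3 al p W q r)
                      {q. is_pmf (\<lambda>(x, y). q x y)} (sibson_MI al p W)"
    unfolding is_max_of_def sibson_val
  proof (intro conjI ballI bexI)
    fix q :: "'x \<Rightarrow> 'y \<Rightarrow> real" assume "q \<in> {q. is_pmf (\<lambda>(x, y). q x y)}"
    then have q: "is_pmf (\<lambda>(x, y). q x y)" by simp
    show "(SUP r\<in>reverse_channels. F_S3 al p W q r) \<le> ereal Iv"
    proof (rule SUP_least)
      fix r :: "'y \<Rightarrow> 'x \<Rightarrow> real" assume r: "r \<in> reverse_channels"
      show "F_S3 al p W q r \<le> ereal Iv"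
        using FS3_le_FS1[OF al1' q r] FS1_le[OF r] by (rule order.trans)
    qed
  next
    show "qst \<in> {q. is_pmf (\<lambda>(x, y). q x y)}" using qst_pmf by simp
    show "(SUP r\<in>reverse_channels. F_S3 al p W qst r) = ereal Iv"
    proof (rule antisym)
      show "(SUP r\<in>reverse_channels. F_S3 al p W qst r) \<le> ereal Iv"
      proof (rule SUP_least)
        fix r :: "'y \<Rightarrow> 'x \<Rightarrow> real" assume r: "r \<in> reverse_channels"
        show "F_S3 al p W qst r \<le> ereal Iv"
          using FS3_le_FS1[OF al1' qst_pmf r] FS1_le[OF r] by (rule order.trans)
      qed
      have "F_S3 al p W qst rs \<le> (SUP r\<in>reverse_channels. F_S3 al p W qst r)"
        using rs_rc by (rule SUP_upper)
      then show "ereal Iv \<le> (SUP r\<in>reverse_channels. F_S3 al p W qst r)"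
        using FS3_qst[OF al1'] by simp
    qed
  qed
next
  fix q :: "'x \<Rightarrow> 'y \<Rightarrow> real" assume q: "is_pmf (\<lambda>(x, y). q x y)"
  have rq: "rq q \<in> reverse_channels" using rq_rc qpmf(1)[OF q] by blast
  have S: "(SUP r\<in>reverse_channels. F_S3 al p W q r) = F_S3 al p W q (rq q)"
  proof (rule antisym)
    show "(SUP r\<in>reverse_channels. F_S3 al p W q r) \<le> F_S3 al p W q (rq q)"
      using FS3_rq[OF q] by (rule SUP_least)
    show "F_S3 al p W q (rq q) \<le> (SUP r\<in>reverse_channels. F_S3 al p W q r)"
      using rq by (rule SUP_upper)
  qed
  show "is_max_of (F_S3 al p W q) reverse_channels (SUP r\<in>reverse_channels. F_S3 al p W q r)"
    unfolding is_max_of_def S using FS3_rq[OF q] rq by blast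
qed

end

theorem theorem1:
  fixes \<alpha> :: real
    and p :: "'x::finite \<Rightarrow> real"
    and W :: "'x \<Rightarrow> 'y::finite \<Rightarrow> real"
  assumes "0 < \<alpha>" and "\<alpha> \<noteq> 1"
    and "is_pmf p" and "is_channel W"
  shows "is_max_of (F_S1 \<alpha> p W) reverse_channels (sibson_MI \<alpha> p W)
       \<and> is_max_of (F_S2 \<alpha> p W) reverse_channels (sibson_MI \<alpha> p W)
       \<and> (1 < \<alpha> \<longrightarrow>
            is_max_of (\<lambda>q. SUP r\<in>reverse_channels. F_S3 \<alpha> p W q r)
                      {q. is_pmf (\<lambda>(x, y). q x y)} (sibson_MI \<alpha> p W)
          \<and> (\<forall>q. is_pmf (\<lambda>(x, y). q x y) \<longrightarrow>
                 is_max_of (F_S3 \<alpha> p W q) reverse_channels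
                           (SUP r\<in>reverse_channels. F_S3 \<alpha> p W q r)))"
proof -
  interpret sib \<alpha> p W using assms by unfold_locales
  show ?thesis by (rule main)
qed

end
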